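(* Let $A$ be a unital C$^*$-subalgebra of $B(H)$ (with $1_A = 1_H$) and let $\phi$ be a faithful state on $A$. Let $\Theta$ be a $*$-automorphism of $A$ with $\phi\circ\Theta=\phi$, and let $\Theta^*: A \to A$ be its adjoint with respect to $\phi$, i.e. the map with $\phi(y^*\Theta^*(x)) = \phi(\Theta(y)^* x)$ for all $x,y\in A$. Then $\Theta^*$ is an operational extreme point of the set of completely positive maps $A \to A$: whenever $\Theta^* = \sum_{i=1}^m \mathrm{Ad}\, a_i \circ \Psi_i$ with $\Psi_1,\dots,\Psi_m$ completely positive maps $A\to A$ and nonzero $a_1,\dots,a_m\in A$ with $\sum_{i=1}^m a_i a_i^* = 1$, there exist $z_1,\dots,z_m \in \Theta^*(A)'$ with $\mathrm{Ad}\, a_i\circ\Psi_i = z_i\Theta^*$ for all $i$.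
   Context: $\mathrm{Ad}\, v(x) = v x v^*$. $\Theta^*(A)'$ is the commutant of $\Theta^*(A)$ in $B(H)$. *)

theory Defs
  imports "HOL-Analysis.Analysis"
begin

class complex_inner = real_normed_vector +
  fixes scaleC :: "complex \<Rightarrow> 'a \<Rightarrow> 'a"
    and cinner :: "'a \<Rightarrow> 'a \<Rightarrow> complex"
  assumes scaleC_add_right: "scaleC c (x + y) = scaleC c x + scaleC c y"
    and scaleC_add_left: "scaleC (c + d) x = scaleC c x + scaleC d x"
    and scaleC_scaleC: "scaleC c (scaleC d x) = scaleC (c * d) x"
    and scaleC_one: "scaleC 1 x = x"
    and scaleR_scaleC: "scaleR r x = scaleC (complex_of_real r) x"
    and cinner_add_right: "cinner x (y + z) = cinner x y + cinner x z"
    and cinner_scaleC_right: "cinner x (scaleC c y) = c * cinner x y"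
    and cinner_commute: "cinner y x = cnj (cinner x y)"
    and cinner_self_norm: "cinner x x = complex_of_real ((norm x)\<^sup>2)"

class chilbert_space = complex_inner + complete_space

definition clinear_op :: "('h::complex_inner \<Rightarrow> 'h) \<Rightarrow> bool" where
  "clinear_op T \<longleftrightarrow> (\<forall>x y. T (x + y) = T x + T y) \<and> (\<forall>c x. T (scaleC c x) = scaleC c (T x))"

definition BH :: "('h::complex_inner \<Rightarrow> 'h) set" where
  "BH = {T. clinear_op T \<and> (\<exists>K. \<forall>x. norm (T x) \<le> K * norm x)}"

definition adj :: "('h::complex_inner \<Rightarrow> 'h) \<Rightarrow> ('h \<Rightarrow> 'h)" where
  "adj T = (SOME S. \<forall>x y. cinner (T x) y = cinner x (S y))"

definition pos_op :: "('h::complex_inner \<Rightarrow> 'h) \<Rightarrow> bool" where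
  "pos_op T \<longleftrightarrow> (\<forall>x. Im (cinner x (T x)) = 0 \<and> Re (cinner x (T x)) \<ge> 0)"

text \<open>Positivity of an n\<times>n operator matrix X, viewed as an operator on \<open>H\<^sup>n\<close>.\<close>
definition pos_opmat :: "nat \<Rightarrow> (nat \<Rightarrow> nat \<Rightarrow> ('h::complex_inner \<Rightarrow> 'h)) \<Rightarrow> bool" where
  "pos_opmat n X \<longleftrightarrow> (\<forall>\<xi> :: nat \<Rightarrow> 'h.
     Im (\<Sum>i<n. \<Sum>j<n. cinner (\<xi> i) (X i j (\<xi> j))) = 0 \<and>
     Re (\<Sum>i<n. \<Sum>j<n. cinner (\<xi> i) (X i j (\<xi> j))) \<ge> 0)"

definition cstar_subalg :: "('h::chilbert_space \<Rightarrow> 'h) set \<Rightarrow> bool" where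
  "cstar_subalg A \<longleftrightarrow> A \<subseteq> BH \<and> id \<in> A \<and>
     (\<forall>S\<in>A. \<forall>T\<in>A. (\<lambda>x. S x + T x) \<in> A \<and> S \<circ> T \<in> A) \<and>
     (\<forall>S\<in>A. \<forall>c. (\<lambda>x. scaleC c (S x)) \<in> A) \<and>
     (\<forall>S\<in>A. adj S \<in> A) \<and>
     (\<forall>T F. T \<in> BH \<and> (\<forall>n. F n \<in> A) \<and> (\<lambda>n. onorm (\<lambda>x. F n x - T x)) \<longlonglongrightarrow> 0 \<longrightarrow> T \<in> A)"

definition linear_map_on :: "('h::complex_inner \<Rightarrow> 'h) set \<Rightarrow> (('h \<Rightarrow> 'h) \<Rightarrow> ('h \<Rightarrow> 'h)) \<Rightarrow> bool" where
  "linear_map_on A F \<longleftrightarrow> F ` A \<subseteq> A \<and>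
     (\<forall>S\<in>A. \<forall>T\<in>A. F (\<lambda>x. S x + T x) = (\<lambda>x. F S x + F T x)) \<and>
     (\<forall>S\<in>A. \<forall>c. F (\<lambda>x. scaleC c (S x)) = (\<lambda>x. scaleC c (F S x)))"

definition complete_positive :: "('h::complex_inner \<Rightarrow> 'h) set \<Rightarrow> (('h \<Rightarrow> 'h) \<Rightarrow> ('h \<Rightarrow> 'h)) \<Rightarrow> bool" where
  "complete_positive A F \<longleftrightarrow> linear_map_on A F \<and>
     (\<forall>n X. (\<forall>i<n. \<forall>j<n. X i j \<in> A) \<and> pos_opmat n X \<longrightarrow> pos_opmat n (\<lambda>i j. F (X i j)))"

definition faithful_state :: "('h::complex_inner \<Rightarrow> 'h) set \<Rightarrow> (('h \<Rightarrow> 'h) \<Rightarrow> complex) \<Rightarrow> bool" where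
  "faithful_state A \<phi> \<longleftrightarrow>
     (\<forall>S\<in>A. \<forall>T\<in>A. \<phi> (\<lambda>x. S x + T x) = \<phi> S + \<phi> T) \<and>
     (\<forall>S\<in>A. \<forall>c. \<phi> (\<lambda>x. scaleC c (S x)) = c * \<phi> S) \<and>
     \<phi> id = 1 \<and>
     (\<forall>T\<in>A. pos_op T \<longrightarrow> Im (\<phi> T) = 0 \<and> Re (\<phi> T) \<ge> 0) \<and>
     (\<forall>T\<in>A. \<phi> (adj T \<circ> T) = 0 \<longrightarrow> T = (\<lambda>_. 0))"

definition star_automorphism :: "('h::complex_inner \<Rightarrow> 'h) set \<Rightarrow> (('h \<Rightarrow> 'h) \<Rightarrow> ('h \<Rightarrow> 'h)) \<Rightarrow> bool" where
  "star_automorphism A \<Theta> \<longleftrightarrow> linear_map_on A \<Theta> \<and> bij_betw \<Theta> A A \<and>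
     (\<forall>S\<in>A. \<forall>T\<in>A. \<Theta> (S \<circ> T) = \<Theta> S \<circ> \<Theta> T) \<and>
     (\<forall>S\<in>A. \<Theta> (adj S) = adj (\<Theta> S))"

definition commutant :: "('h::complex_inner \<Rightarrow> 'h) set \<Rightarrow> ('h \<Rightarrow> 'h) set" where
  "commutant M = {z \<in> BH. \<forall>T\<in>M. z \<circ> T = T \<circ> z}"

definition Ad :: "('h::complex_inner \<Rightarrow> 'h) \<Rightarrow> ('h \<Rightarrow> 'h) \<Rightarrow> ('h \<Rightarrow> 'h)" where
  "Ad v x = v \<circ> x \<circ> adj v"

end

theory Submission
  imports Defs
begin


lemma scaleC_zero_left[simp]: "scaleC 0 (x::'a::complex_inner) = 0"
  using scaleR_scaleC[of 0 x] by simp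

lemma scaleC_minus1: "scaleC (-1) (x::'a::complex_inner) = - x"
  using scaleR_scaleC[of "-1" x] by simp

lemma scaleC_zero_right[simp]: "scaleC c (0::'a::complex_inner) = 0"
  using scaleC_add_right[of c 0 0] by simp

lemma scaleC_minus_right: "scaleC c (- (x::'a::complex_inner)) = - scaleC c x"
proof -
  have "scaleC c (-x) = scaleC c (scaleC (-1) x)" by (simp add: scaleC_minus1)
  also have "\<dots> = scaleC (-1) (scaleC c x)" by (simp add: scaleC_scaleC)
  also have "\<dots> = - scaleC c x" by (simp add: scaleC_minus1)
  finally show ?thesis .
qed

lemma scaleC_diff_right: "scaleC c ((x::'a::complex_inner) - y) = scaleC c x - scaleC c y"
  using scaleC_add_right[of c x "-y"] by (simp add: scaleC_minus_right)

lemma scaleC_minus_left: "scaleC (- c) (x::'a::complex_inner) = - scaleC c x"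
proof -
  have "scaleC (- c) x = scaleC (-1) (scaleC c x)" by (simp add: scaleC_scaleC)
  also have "\<dots> = - scaleC c x" by (simp add: scaleC_minus1)
  finally show ?thesis .
qed

lemma scaleC_diff_left: "scaleC (c - d) (x::'a::complex_inner) = scaleC c x - scaleC d x"
  using scaleC_add_left[of c "-d" x] by (simp add: scaleC_minus_left)

lemma cinner_add_left: "cinner ((x::'a::complex_inner) + y) z = cinner x z + cinner y z"
proof -
  have "cinner (x + y) z = cnj (cinner z (x+y))" by (rule cinner_commute)
  also have "\<dots> = cnj (cinner z x) + cnj (cinner z y)" by (simp only: cinner_add_right complex_cnj_add)
  also have "\<dots> = cinner x z + cinner y z" by (simp only: cinner_commute[symmetric])
  finally show ?thesis .
qed

lemma cinner_scaleC_left: "cinner (scaleC c (x::'a::complex_inner)) y = cnj c * cinner x y"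
proof -
  have "cinner (scaleC c x) y = cnj (cinner y (scaleC c x))" by (rule cinner_commute)
  also have "\<dots> = cnj c * cnj (cinner y x)" by (simp only: cinner_scaleC_right complex_cnj_mult)
  also have "\<dots> = cnj c * cinner x y" by (simp only: cinner_commute[symmetric])
  finally show ?thesis .
qed

lemma cinner_zero_right[simp]: "cinner (x::'a::complex_inner) 0 = 0"
  using cinner_add_right[of x 0 0] by simp

lemma cinner_zero_left[simp]: "cinner 0 (x::'a::complex_inner) = 0"
  using cinner_add_left[of 0 0 x] by simp

lemma cinner_minus_right: "cinner (x::'a::complex_inner) (- y) = - cinner x y"
  using cinner_add_right[of x y "-y"] by (simp add: eq_neg_iff_add_eq_0 add.commute)

lemma cinner_minus_left: "cinner (- (x::'a::complex_inner)) y = - cinner x y"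
  using cinner_add_left[of x "-x" y] by (simp add: eq_neg_iff_add_eq_0 add.commute)

lemma cinner_diff_right: "cinner (x::'a::complex_inner) (y - z) = cinner x y - cinner x z"
  using cinner_add_right[of x y "-z"] by (simp add: cinner_minus_right)

lemma cinner_diff_left: "cinner ((x::'a::complex_inner) - y) z = cinner x z - cinner y z"
  using cinner_add_left[of x "-y" z] by (simp add: cinner_minus_left)

lemma cinner_sum_right: "cinner (x::'a::complex_inner) (\<Sum>i\<in>I. f i) = (\<Sum>i\<in>I. cinner x (f i))"
  by (induction I rule: infinite_finite_induct) (simp_all add: cinner_add_right)

lemma cinner_sum_left: "cinner (\<Sum>i\<in>I. f i) (x::'a::complex_inner) = (\<Sum>i\<in>I. cinner (f i) x)"
  by (induction I rule: infinite_finite_induct) (simp_all add: cinner_add_left)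

lemma cinner_self_eq_0: "cinner (x::'a::complex_inner) x = 0 \<longleftrightarrow> x = 0"
  using cinner_self_norm[of x] by auto

lemma Re_cinner_self: "Re (cinner (x::'a::complex_inner) x) = (norm x)\<^sup>2"
  using cinner_self_norm[of x] by simp

lemma Im_cinner_self: "Im (cinner (x::'a::complex_inner) x) = 0"
  using cinner_self_norm[of x] by simp

lemma cnj_cinner_self: "cnj (cinner (x::'a::complex_inner) x) = cinner x x"
  using cinner_self_norm[of x] by simp

lemma norm_scaleC: "norm (scaleC c (x::'a::complex_inner)) = cmod c * norm x"
proof -
  have "complex_of_real ((norm (scaleC c x))\<^sup>2) = cnj c * c * complex_of_real ((norm x)\<^sup>2)"
    using cinner_self_norm[of "scaleC c x"] cinner_self_norm[of x] cinner_scaleC_left[of c x "scaleC c x"] cinner_scaleC_right[of x c x]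
    by (simp add: mult.assoc)
  also have "cnj c * c = complex_of_real ((cmod c)\<^sup>2)" using complex_norm_square[of c] by (simp add: mult.commute)
  finally have "complex_of_real ((norm (scaleC c x))\<^sup>2) = complex_of_real (((cmod c * norm x))\<^sup>2)"
    by (simp add: power_mult_distrib)
  then have "(norm (scaleC c x))\<^sup>2 = ((cmod c * norm x))\<^sup>2"
    using of_real_eq_iff by blast
  then show ?thesis by (simp add: power2_eq_iff_nonneg)
qed

lemma herm_coeff:
  fixes q0 A B C :: complex
  assumes "\<And>t. Im (q0 + t * A + cnj t * B + cnj t * t * C) = 0"
  shows "B = cnj A"
proof -
  have 0: "Im q0 = 0" using assms[of 0] by simp
  have 1: "Im q0 + Im A + Im B + Im C = 0" using assms[of 1] by simp
  have 2: "Im q0 - Im A - Im B + Im C = 0" using assms[of "-1"] by simp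
  have 3: "Im q0 + Re A - Re B + Im C = 0" using assms[of "\<i>"] by simp
  show ?thesis using 0 1 2 3 by (simp add: complex_eq_iff)
qed

lemma quad_zero:
  fixes A B C :: complex
  assumes "\<And>t. Im (t * A + cnj t * B + cnj t * t * C) = 0"
    and "\<And>t. Re (t * A + cnj t * B + cnj t * t * C) \<ge> 0"
  shows "B = 0"
proof -
  have BA: "B = cnj A" using herm_coeff[of 0 A B C] assms(1) by simp
  define r where "r = Re A"
  define sI where "sI = Im A"
  define c where "c = Re C"
  have R: "\<And>t. Re (t * A + cnj t * cnj A + cnj t * t * C) \<ge> 0" using assms(2) BA by simp
  have e1: "2*r + c \<ge> 0" using R[of 1] by (simp add: r_def c_def)
  have e2: "-2*r + c \<ge> 0" using R[of "-1"] by (simp add: r_def c_def)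
  have c0: "c \<ge> 0" using e1 e2 by simp
  have gen: "\<And>x::real. 2*x*r + x*x*c \<ge> 0"
  proof -
    fix x :: real
    show "2*x*r + x*x*c \<ge> 0" using R[of "complex_of_real x"] by (simp add: r_def c_def algebra_simps)
  qed
  have gen2: "\<And>x::real. 2 * x * sI + x * x * c \<ge> 0"
  proof -
    fix x :: real
    show "2 * x * sI + x * x * c \<ge> 0" using R[of "- \<i> * complex_of_real x"] by (simp add: sI_def c_def algebra_simps)
  qed
  have lem: "\<And>u. (\<And>x::real. 2*x*u + x*x*c \<ge> 0) \<Longrightarrow> u = 0"
  proof (rule ccontr)
    fix u :: real assume h: "\<And>x::real. 2*x*u + x*x*c \<ge> 0" and u: "u \<noteq> 0"
    define x where "x = - u / (c + 1)"
    have cp: "c + 1 > 0" using c0 by simp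
    have "2*x*u + x*x*c = u*u/(c+1) * (c/(c+1) - 2)"
      using cp unfolding x_def by (simp add: divide_simps) algebra
    also have "\<dots> < 0"
    proof (rule mult_pos_neg)
      show "u*u/(c+1) > 0" using u cp by (metis divide_pos_pos not_real_square_gt_zero)
      have "c/(c+1) < 1" using cp by simp
      then show "c/(c+1) - 2 < 0" by simp
    qed
    finally show False using h[of x] by simp
  qed
  have "r = 0" using lem gen by blast
  moreover have "sI = 0" using lem gen2 by blast
  ultimately have "A = 0" unfolding r_def sI_def by (simp add: complex_eqI)
  then show ?thesis using BA by simp
qed



lemma cinner_expand:
  "cinner ((a::'a::complex_inner) + scaleC t b) (a + scaleC t b)
     = cinner a a + t * cinner a b + cnj t * cinner b a + cnj t * t * cinner b b"
  by (simp add: cinner_add_left cinner_add_right cinner_scaleC_left cinner_scaleC_right algebra_simps)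

lemma norm_sq_add: "(norm ((a::'a::complex_inner) + b))\<^sup>2 = (norm a)\<^sup>2 + (norm b)\<^sup>2 + 2 * Re (cinner a b)"
proof -
  have "(norm (a + b))\<^sup>2 = Re (cinner (a+b) (a+b))" by (simp add: Re_cinner_self)
  also have "\<dots> = Re (cinner a a) + Re (cinner b b) + Re (cinner a b) + Re (cinner b a)"
    by (simp add: cinner_add_left cinner_add_right)
  also have "Re (cinner b a) = Re (cinner a b)" using cinner_commute[of a b] by simp
  finally show ?thesis by (simp add: Re_cinner_self)
qed

lemma norm_sq_diff: "(norm ((a::'a::complex_inner) - b))\<^sup>2 = (norm a)\<^sup>2 + (norm b)\<^sup>2 - 2 * Re (cinner a b)"
  using norm_sq_add[of a "-b"] by (simp add: cinner_minus_right)

lemma parallelogram: "(norm ((a::'a::complex_inner) + b))\<^sup>2 + (norm (a - b))\<^sup>2 = 2 * (norm a)\<^sup>2 + 2 * (norm b)\<^sup>2"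
  using norm_sq_add[of a b] norm_sq_diff[of a b] by simp

lemma cauchy_schwarz: "cmod (cinner (x::'a::complex_inner) y) \<le> norm x * norm y"
proof (cases "x = 0")
  case True then show ?thesis by simp
next
  case False
  define c where "c = cinner x y / cinner x x"
  define z where "z = y - scaleC c x"
  have xx: "cinner x x \<noteq> 0" using False cinner_self_eq_0 by blast
  have xz: "cinner x z = 0" unfolding z_def c_def using xx by (simp add: cinner_diff_right cinner_scaleC_right)
  have zx: "cinner z x = 0" using xz cinner_commute[of z x] by simp
  have y: "y = z + scaleC c x" by (simp add: z_def)
  have "cinner y y = cinner z z + cnj c * c * cinner x x"
    unfolding y cinner_expand using xz zx by simp
  then have "(norm y)\<^sup>2 = (norm z)\<^sup>2 + (cmod c)\<^sup>2 * (norm x)\<^sup>2"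
    using cinner_self_norm[of y] cinner_self_norm[of z] cinner_self_norm[of x]
    by (metis (no_types, lifting) Re_complex_of_real cinner_scaleC_left cinner_scaleC_right cinner_self_norm norm_scaleC
        mult.assoc plus_complex.sel(1) power_mult_distrib)
  then have 1: "(cmod c)\<^sup>2 * (norm x)\<^sup>2 \<le> (norm y)\<^sup>2" by simp
  have "cmod c = cmod (cinner x y) / (norm x)\<^sup>2"
    unfolding c_def using cinner_self_norm[of x] by (simp add: norm_divide norm_power)
  then have "cmod (cinner x y) = cmod c * (norm x)\<^sup>2" using False by simp
  then have "(cmod (cinner x y))\<^sup>2 = ((cmod c)\<^sup>2 * (norm x)\<^sup>2) * (norm x)\<^sup>2"
    by (simp add: power2_eq_square)
  also have "\<dots> \<le> (norm y)\<^sup>2 * (norm x)\<^sup>2" using 1 by (simp add: mult_right_mono)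
  finally have "(cmod (cinner x y))\<^sup>2 \<le> (norm x * norm y)\<^sup>2" by (simp add: power_mult_distrib mult.commute)
  then show ?thesis by (simp add: power2_le_iff_abs_le)
qed

lemma riesz:
  fixes f :: "'a::chilbert_space \<Rightarrow> complex"
  assumes add: "\<And>x y. f (x + y) = f x + f y"
    and hom: "\<And>c x. f (scaleC c x) = c * f x"
    and bnd: "\<And>x. cmod (f x) \<le> K * norm x"
  shows "\<exists>y. \<forall>x. f x = cinner y x"
proof (cases "\<forall>x. f x = 0")
  case True
  then show ?thesis by (intro exI[of _ 0]) simp
next
  case False
  then obtain v where fv: "f v \<noteq> 0" by blast
  have f0: "f 0 = 0" using hom[of 0 0] by simp
  have fminus: "\<And>x. f (- x) = - f x" using hom[of "-1"] by (simp add: scaleC_minus1)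
  have fdiff: "\<And>x y. f (x - y) = f x - f y" using add fminus by (metis diff_conv_add_uminus)
  have fscaleR: "\<And>r x. f (scaleR r x) = r * f x" using hom by (simp add: scaleR_scaleC)
  define N where "N = {x. f x = 0}"
  have N0: "0 \<in> N" using f0 by (simp add: N_def)
  have Nadd: "\<And>x y. x \<in> N \<Longrightarrow> y \<in> N \<Longrightarrow> x + y \<in> N" by (simp add: N_def add)
  have Nminus: "\<And>x. x \<in> N \<Longrightarrow> - x \<in> N" by (simp add: N_def fminus)
  have NscaleR: "\<And>r x. x \<in> N \<Longrightarrow> scaleR r x \<in> N" by (simp add: N_def fscaleR)
  have NscaleC: "\<And>c x. x \<in> N \<Longrightarrow> scaleC c x \<in> N" by (simp add: N_def hom)
  define D where "D = (\<lambda>m. norm (v - m)) ` N"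
  define d where "d = Inf D"
  have Dne: "D \<noteq> {}" using N0 by (auto simp: D_def)
  have Dbdd: "bdd_below D" unfolding D_def by (rule bdd_belowI[of _ 0]) auto
  have dlow: "\<And>m. m \<in> N \<Longrightarrow> d \<le> norm (v - m)"
    unfolding d_def D_def by (rule cInf_lower) (use Dbdd[unfolded D_def] in auto)
  have d0: "0 \<le> d" unfolding d_def using Dne by (rule cInf_greatest) (auto simp: D_def)
  define e :: "nat \<Rightarrow> real" where "e k = inverse (real (Suc k))" for k
  have epos: "\<And>k. e k > 0" by (simp add: e_def)
  have emono: "\<And>k l. k \<le> l \<Longrightarrow> e l \<le> e k" by (simp add: e_def le_imp_inverse_le)
  have ele1: "\<And>k. e k \<le> 1" by (simp add: e_def inverse_le_1_iff)
  have "\<forall>k. \<exists>m. m \<in> N \<and> norm (v - m) < d + e k"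
  proof
    fix k
    have "Inf D < d + e k" using epos[of k] by (simp add: d_def)
    then obtain r where "r \<in> D" "r < d + e k" using cInf_lessD[OF Dne] by blast
    then show "\<exists>m. m \<in> N \<and> norm (v - m) < d + e k" by (auto simp: D_def)
  qed
  then obtain n where nN: "\<And>k. n k \<in> N" and nd: "\<And>k. norm (v - n k) < d + e k" by metis
  have est: "(norm (n k - n l))\<^sup>2 \<le> 2 * (norm (v - n k))\<^sup>2 + 2 * (norm (v - n l))\<^sup>2 - 4 * d\<^sup>2" for k l
  proof -
    define mid where "mid = scaleR (1/2) (n k + n l)"
    have midN: "mid \<in> N" unfolding mid_def by (intro NscaleR Nadd nN)
    have eq1: "(v - n k) + (v - n l) = scaleR 2 (v - mid)"
    proof -
      have "scaleR 2 (v - mid) = scaleR 2 v - scaleR 2 mid" by (rule scaleR_diff_right)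
      also have "scaleR 2 mid = n k + n l" by (simp add: mid_def)
      finally show ?thesis by (simp add: scaleR_2)
    qed
    have eq2: "(v - n k) - (v - n l) = n l - n k" by simp
    have "norm ((v - n k) + (v - n l)) = 2 * norm (v - mid)" by (simp add: eq1)
    moreover have "d \<le> norm (v - mid)" using dlow midN by blast
    ultimately have "2 * d \<le> norm ((v - n k) + (v - n l))" by simp
    then have "(2 * d)\<^sup>2 \<le> (norm ((v - n k) + (v - n l)))\<^sup>2"
      using d0 by (intro power_mono) auto
    then have "4 * d\<^sup>2 \<le> (norm ((v - n k) + (v - n l)))\<^sup>2"
      by (simp add: power_mult_distrib)
    moreover have "norm (n k - n l) = norm (n l - n k)" by (simp add: norm_minus_commute)
    ultimately show ?thesis using parallelogram[of "v - n k" "v - n l"] eq2 by simp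
  qed
  have sqb: "(norm (v - n k))\<^sup>2 \<le> d\<^sup>2 + e k * (2 * d + 1)" for k
  proof -
    have a: "norm (v - n k) \<le> d + e k" using nd[of k] by simp
    have b: "0 \<le> norm (v - n k)" by simp
    have "(norm (v - n k))\<^sup>2 \<le> (d + e k)\<^sup>2" using a b by (simp add: power_mono)
    also have "\<dots> = d\<^sup>2 + e k * (2 * d + e k)" by (simp add: power2_eq_square algebra_simps)
    also have "\<dots> \<le> d\<^sup>2 + e k * (2 * d + 1)" using ele1[of k] epos[of k] by simp
    finally show ?thesis .
  qed
  have est2: "(norm (n k - n l))\<^sup>2 \<le> 4 * e M * (2 * d + 1)" if "M \<le> k" "M \<le> l" for M k l
  proof -
    have "(norm (n k - n l))\<^sup>2 \<le> 2 * (d\<^sup>2 + e k * (2 * d + 1)) + 2 * (d\<^sup>2 + e l * (2 * d + 1)) - 4 * d\<^sup>2"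
      using est[of k l] sqb[of k] sqb[of l] by (smt (verit))
    also have "\<dots> = 2 * (e k + e l) * (2 * d + 1)" by (simp add: algebra_simps)
    also have "\<dots> \<le> 2 * (e M + e M) * (2 * d + 1)"
      using emono[OF that(1)] emono[OF that(2)] d0 by (intro mult_right_mono mult_left_mono) auto
    finally show ?thesis by simp
  qed
  have "Cauchy n"
  proof (rule metric_CauchyI)
    fix eps :: real assume eps: "eps > 0"
    have "0 < eps\<^sup>2 / (4 * (2 * d + 1))" using eps d0 by simp
    then obtain M where M: "inverse (real (Suc M)) < eps\<^sup>2 / (4 * (2 * d + 1))"
      using reals_Archimedean by blast
    have "\<forall>k\<ge>M. \<forall>l\<ge>M. dist (n k) (n l) < eps"
    proof (intro allI impI)
      fix k l assume "M \<le> k" "M \<le> l"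
      have "(norm (n k - n l))\<^sup>2 \<le> 4 * e M * (2 * d + 1)" using est2 \<open>M \<le> k\<close> \<open>M \<le> l\<close> by blast
      also have "\<dots> < eps\<^sup>2" using M d0 by (simp add: e_def field_simps)
      finally have "(norm (n k - n l))\<^sup>2 < eps\<^sup>2" .
      then have "norm (n k - n l) < eps" using eps by (simp add: power_less_imp_less_base)
      then show "dist (n k) (n l) < eps" by (simp add: dist_norm)
    qed
    then show "\<exists>M. \<forall>m\<ge>M. \<forall>n'\<ge>M. dist (n m) (n n') < eps" by blast
  qed
  then obtain l where lim: "n \<longlonglongrightarrow> l" using Cauchy_convergent_iff convergent_def by blast
  have limn: "(\<lambda>k. norm (n k - l)) \<longlonglongrightarrow> 0"
    using lim by (simp add: tendsto_norm_zero_iff LIM_zero)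
  have lN: "l \<in> N"
  proof -
    have "\<And>k. cmod (f l) \<le> K * norm (n k - l)"
    proof -
      fix k
      have "f (n k - l) = - f l" using nN[of k] by (simp add: N_def fdiff)
      then show "cmod (f l) \<le> K * norm (n k - l)" using bnd[of "n k - l"] by simp
    qed
    moreover have "(\<lambda>k. K * norm (n k - l)) \<longlonglongrightarrow> 0" using tendsto_mult_right_zero[OF limn] by simp
    ultimately have "cmod (f l) \<le> 0" by (intro LIMSEQ_le_const[where X="\<lambda>k. K * norm (n k - l)"]) auto
    then show ?thesis by (simp add: N_def)
  qed
  have vl: "norm (v - l) \<le> d"
  proof -
    have "\<And>k. norm (v - l) \<le> d + e k + norm (n k - l)"
    proof -
      fix k
      have "norm (v - l) \<le> norm (v - n k) + norm (n k - l)" using norm_triangle_ineq[of "v - n k" "n k - l"] by simp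
      then show "norm (v - l) \<le> d + e k + norm (n k - l)" using nd[of k] by simp
    qed
    moreover have "e \<longlonglongrightarrow> 0" unfolding e_def using LIMSEQ_inverse_real_of_nat by simp
    then have "(\<lambda>k. d + e k + norm (n k - l)) \<longlonglongrightarrow> d + 0 + 0"
      by (intro tendsto_add tendsto_const limn)
    ultimately show ?thesis by (intro LIMSEQ_le_const[where X="\<lambda>k. d + e k + norm (n k - l)"]) auto
  qed
  define w where "w = v - l"
  have wmin: "norm w \<le> norm (w - m)" if "m \<in> N" for m
  proof -
    have eqq: "w - m = v - (l + m)" by (simp add: w_def)
    have "d \<le> norm (w - m)" unfolding eqq by (rule dlow[OF Nadd[OF lN that]])
    then show ?thesis using vl by (simp add: w_def)
  qed
  have orth: "cinner m w = 0" if "m \<in> N" for m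
  proof (rule quad_zero[of "cinner w m" "cinner m w" "cinner m m"])
    fix t
    have eq: "t * cinner w m + cnj t * cinner m w + cnj t * t * cinner m m
        = cinner (w + scaleC t m) (w + scaleC t m) - cinner w w"
      by (simp add: cinner_expand)
    have mN: "- scaleC t m \<in> N" using that by (intro Nminus NscaleC)
    have "norm w \<le> norm (w + scaleC t m)" using wmin[OF mN] by simp
    then have le: "(norm w)\<^sup>2 \<le> (norm (w + scaleC t m))\<^sup>2" by (simp add: power_mono)
    show "Im (t * cinner w m + cnj t * cinner m w + cnj t * t * cinner m m) = 0"
      unfolding eq by (simp add: Im_cinner_self)
    show "0 \<le> Re (t * cinner w m + cnj t * cinner m w + cnj t * t * cinner m m)"
      unfolding eq using le by (simp add: Re_cinner_self)
  qed
  have fw: "f w \<noteq> 0" using fv lN by (simp add: w_def fdiff N_def)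
  have wne: "w \<noteq> 0" using fw f0 by auto
  have ww: "cinner w w \<noteq> 0" using wne cinner_self_eq_0 by blast
  have "\<forall>x. f x = cinner (scaleC (cnj (f w) / cinner w w) w) x"
  proof
    fix x
    define x' where "x' = scaleC (f w) x - scaleC (f x) w"
    have "x' \<in> N" by (simp add: N_def x'_def fdiff hom)
    then have "cinner x' w = 0" by (rule orth)
    then have "cnj (f w) * cinner x w - cnj (f x) * cinner w w = 0"
      by (simp add: x'_def cinner_diff_left cinner_scaleC_left)
    then have "cnj (cnj (f w) * cinner x w - cnj (f x) * cinner w w) = 0" by simp
    then have "f w * cinner w x - f x * cinner w w = 0"
      using cinner_commute[of w x] cnj_cinner_self[of w] by simp
    then have "f x = f w * cinner w x / cinner w w" using ww by (simp add: field_simps)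
    then show "f x = cinner (scaleC (cnj (f w) / cinner w w) w) x"
      using cnj_cinner_self[of w] by (simp add: cinner_scaleC_left)
  qed
  then show ?thesis by blast
qed



lemma BH_add: "T \<in> BH \<Longrightarrow> T (x + y) = T x + T y"
  by (simp add: BH_def clinear_op_def)

lemma BH_scaleC: "T \<in> BH \<Longrightarrow> T (scaleC c x) = scaleC c (T x)"
  by (simp add: BH_def clinear_op_def)

lemma BH_minus: "T \<in> BH \<Longrightarrow> T (- x) = - T x"
  using BH_scaleC[of T "-1" x] by (simp add: scaleC_minus1)

lemma BH_zero: "T \<in> BH \<Longrightarrow> T 0 = 0"
  using BH_scaleC[of T 0 0] by simp

lemma adj_exists:
  fixes T :: "'h::chilbert_space \<Rightarrow> 'h"
  assumes T: "T \<in> BH"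
  shows "\<exists>S. \<forall>x y. cinner (T x) y = cinner x (S y)"
proof -
  obtain K where K: "\<And>x. norm (T x) \<le> K * norm x" using T by (auto simp: BH_def)
  have "\<forall>y. \<exists>u. \<forall>x. cinner y (T x) = cinner u x"
  proof
    fix y
    show "\<exists>u. \<forall>x. cinner y (T x) = cinner u x"
    proof (rule riesz[where K = "norm y * K"])
      fix x1 x2 show "cinner y (T (x1 + x2)) = cinner y (T x1) + cinner y (T x2)"
        by (simp add: BH_add[OF T] cinner_add_right)
    next
      fix c x show "cinner y (T (scaleC c x)) = c * cinner y (T x)"
        by (simp add: BH_scaleC[OF T] cinner_scaleC_right)
    next
      fix x
      have "cmod (cinner y (T x)) \<le> norm y * norm (T x)" by (rule cauchy_schwarz)
      also have "\<dots> \<le> norm y * (K * norm x)" using K[of x] by (simp add: mult_left_mono)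
      finally show "cmod (cinner y (T x)) \<le> norm y * K * norm x" by (simp add: mult.assoc)
    qed
  qed
  then obtain S where S: "\<And>y x. cinner y (T x) = cinner (S y) x" by metis
  have "\<forall>x y. cinner (T x) y = cinner x (S y)"
  proof (intro allI)
    fix x y
    have "cinner (T x) y = cnj (cinner y (T x))" by (rule cinner_commute)
    also have "\<dots> = cnj (cinner (S y) x)" by (simp add: S)
    also have "\<dots> = cinner x (S y)" by (simp only: cinner_commute[symmetric])
    finally show "cinner (T x) y = cinner x (S y)" .
  qed
  then show ?thesis by blast
qed

lemma adj_prop:
  fixes T :: "'h::chilbert_space \<Rightarrow> 'h"
  assumes "T \<in> BH"
  shows "cinner (T x) y = cinner x (adj T y)"
proof -
  have "\<forall>x y. cinner (T x) y = cinner x (adj T y)"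
    unfolding adj_def by (rule someI_ex[OF adj_exists[OF assms]])
  then show ?thesis by blast
qed

lemma adj_prop2:
  fixes T :: "'h::chilbert_space \<Rightarrow> 'h"
  assumes "T \<in> BH"
  shows "cinner x (T y) = cinner (adj T x) y"
proof -
  have "cinner x (T y) = cnj (cinner (T y) x)" by (rule cinner_commute)
  also have "\<dots> = cnj (cinner y (adj T x))" by (simp add: adj_prop[OF assms])
  also have "\<dots> = cinner (adj T x) y" by (simp only: cinner_commute[symmetric])
  finally show ?thesis .
qed

lemma cinner_all_zero: "(\<And>x. cinner x (v::'a::complex_inner) = 0) \<Longrightarrow> v = 0"
  using cinner_self_eq_0 by blast

lemma id_BH: "(id :: 'h::complex_inner \<Rightarrow> 'h) \<in> BH"
  unfolding BH_def clinear_op_def by (auto intro: exI[of _ 1])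

lemma adj_id: "adj (id :: 'h::chilbert_space \<Rightarrow> 'h) = id"
proof
  fix y :: 'h
  have "\<And>x. cinner x (y - adj id y) = 0"
    using adj_prop[OF id_BH] by (simp add: cinner_diff_right)
  then have "y - adj id y = 0" by (rule cinner_all_zero)
  then show "adj id y = id y" by simp
qed

definition qf :: "nat \<Rightarrow> (nat \<Rightarrow> nat \<Rightarrow> ('h::complex_inner \<Rightarrow> 'h)) \<Rightarrow> (nat \<Rightarrow> 'h) \<Rightarrow> complex" where
  "qf n X \<xi> = (\<Sum>i<n. \<Sum>j<n. cinner (\<xi> i) (X i j (\<xi> j)))"

lemma pos_opmat_qf: "pos_opmat n X \<longleftrightarrow> (\<forall>\<xi>. Im (qf n X \<xi>) = 0 \<and> Re (qf n X \<xi>) \<ge> 0)"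
  by (simp add: pos_opmat_def qf_def)

lemma sum2: "(\<Sum>i<(2::nat). f i) = f 0 + f 1"
  by (simp add: eval_nat_numeral)

lemma qf2: "qf 2 X \<xi> = cinner (\<xi> 0) (X 0 0 (\<xi> 0)) + cinner (\<xi> 0) (X 0 1 (\<xi> 1))
   + cinner (\<xi> 1) (X 1 0 (\<xi> 0)) + cinner (\<xi> 1) (X 1 1 (\<xi> 1))"
  by (simp add: qf_def sum2)

lemma pos_Ad:
  fixes a :: "'h::chilbert_space \<Rightarrow> 'h"
  assumes a: "a \<in> BH" and X: "pos_opmat n X"
  shows "pos_opmat n (\<lambda>i j. a \<circ> X i j \<circ> adj a)"
proof -
  have "qf n (\<lambda>i j. a \<circ> X i j \<circ> adj a) \<xi> = qf n X (\<lambda>i. adj a (\<xi> i))" for \<xi>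
    unfolding qf_def by (simp add: adj_prop2[OF a])
  then show ?thesis using X unfolding pos_opmat_qf by simp
qed

definition Pm :: "('h::complex_inner \<Rightarrow> 'h) \<Rightarrow> nat \<Rightarrow> nat \<Rightarrow> ('h \<Rightarrow> 'h)" where
  "Pm y i j = (if i = 0 then (if j = 0 then id else y) else (if j = 0 then adj y else adj y \<circ> y))"

lemma qf_Pm:
  fixes y :: "'h::chilbert_space \<Rightarrow> 'h"
  assumes y: "y \<in> BH"
  shows "qf 2 (Pm y) \<xi> = cinner (\<xi> 0 + y (\<xi> 1)) (\<xi> 0 + y (\<xi> 1))"
proof -
  have "qf 2 (Pm y) \<xi> = cinner (\<xi> 0) (\<xi> 0) + cinner (\<xi> 0) (y (\<xi> 1))
      + cinner (\<xi> 1) (adj y (\<xi> 0)) + cinner (\<xi> 1) (adj y (y (\<xi> 1)))"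
    by (simp add: qf2 Pm_def)
  also have "\<dots> = cinner (\<xi> 0) (\<xi> 0) + cinner (\<xi> 0) (y (\<xi> 1))
      + cinner (y (\<xi> 1)) (\<xi> 0) + cinner (y (\<xi> 1)) (y (\<xi> 1))"
    by (simp add: adj_prop[OF y])
  also have "\<dots> = cinner (\<xi> 0 + y (\<xi> 1)) (\<xi> 0 + y (\<xi> 1))"
    by (simp add: cinner_add_left cinner_add_right)
  finally show ?thesis .
qed

lemma pos_Pm:
  fixes y :: "'h::chilbert_space \<Rightarrow> 'h"
  assumes y: "y \<in> BH"
  shows "pos_opmat 2 (Pm y)"
  unfolding pos_opmat_qf qf_Pm[OF y] by (simp add: Im_cinner_self Re_cinner_self)

lemma qf_zero_kernel:
  fixes M :: "nat \<Rightarrow> nat \<Rightarrow> ('h::chilbert_space \<Rightarrow> 'h)"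
  assumes BH: "\<And>i j. i < 2 \<Longrightarrow> j < 2 \<Longrightarrow> M i j \<in> BH"
    and pos: "pos_opmat 2 M" and z: "qf 2 M \<xi> = 0"
  shows "M 0 0 (\<xi> 0) + M 0 1 (\<xi> 1) = 0"
proof -
  define u where "u = M 0 0 (\<xi> 0) + M 0 1 (\<xi> 1)"
  have B00: "M 0 0 \<in> BH" and B10: "M (Suc 0) 0 \<in> BH" using BH by auto
  define A where "A = cinner (\<xi> 0) (M 0 0 u) + cinner (\<xi> 1) (M 1 0 u)"
  define C where "C = cinner u (M 0 0 u)"
  have exp: "qf 2 M (\<lambda>j. if j = 0 then \<xi> 0 + scaleC t u else \<xi> j)
      = qf 2 M \<xi> + t * A + cnj t * cinner u u + cnj t * t * C" for t
    unfolding qf2 A_def C_def u_def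
    by (simp add: BH_add[OF B00] BH_scaleC[OF B00] BH_add[OF B10] BH_scaleC[OF B10]
        cinner_add_left cinner_add_right cinner_scaleC_left cinner_scaleC_right algebra_simps)
  have "cinner u u = 0"
  proof (rule quad_zero[of A _ C])
    fix t
    have "Im (qf 2 M (\<lambda>j. if j = 0 then \<xi> 0 + scaleC t u else \<xi> j)) = 0 \<and>
          Re (qf 2 M (\<lambda>j. if j = 0 then \<xi> 0 + scaleC t u else \<xi> j)) \<ge> 0"
      using pos unfolding pos_opmat_qf by blast
    then show "Im (t * A + cnj t * cinner u u + cnj t * t * C) = 0"
      and "0 \<le> Re (t * A + cnj t * cinner u u + cnj t * t * C)"
      unfolding exp z by simp_all
  qed
  then show ?thesis using cinner_self_eq_0 u_def by blast
qed

lemma qf_herm: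
  fixes M :: "nat \<Rightarrow> nat \<Rightarrow> ('h::chilbert_space \<Rightarrow> 'h)"
  assumes BH: "\<And>i j. i < 2 \<Longrightarrow> j < 2 \<Longrightarrow> M i j \<in> BH"
    and pos: "pos_opmat 2 M"
  shows "cinner \<beta> (M 1 0 \<alpha>) = cnj (cinner \<alpha> (M 0 1 \<beta>))"
proof -
  have B01: "M 0 (Suc 0) \<in> BH" and B11: "M (Suc 0) (Suc 0) \<in> BH" using BH by auto
  have exp: "qf 2 M (\<lambda>j. if j = 0 then \<alpha> else scaleC t \<beta>)
     = cinner \<alpha> (M 0 0 \<alpha>) + t * cinner \<alpha> (M 0 1 \<beta>) + cnj t * cinner \<beta> (M 1 0 \<alpha>)
       + cnj t * t * cinner \<beta> (M 1 1 \<beta>)" for t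
    unfolding qf2
    by (simp add: BH_scaleC[OF B01] BH_scaleC[OF B11] cinner_scaleC_left cinner_scaleC_right algebra_simps)
  show ?thesis
  proof (rule herm_coeff)
    fix t
    have "Im (qf 2 M (\<lambda>j. if j = 0 then \<alpha> else scaleC t \<beta>)) = 0"
      using pos unfolding pos_opmat_qf by blast
    then show "Im (cinner \<alpha> (M 0 0 \<alpha>) + t * cinner \<alpha> (M 0 1 \<beta>) + cnj t * cinner \<beta> (M 1 0 \<alpha>)
       + cnj t * t * cinner \<beta> (M 1 1 \<beta>)) = 0" unfolding exp .
  qed
qed



theorem mainTheorem4:
  fixes A :: "('h::chilbert_space \<Rightarrow> 'h) set"
    and \<phi> :: "('h \<Rightarrow> 'h) \<Rightarrow> complex"
    and \<Theta> \<Theta>s :: "('h \<Rightarrow> 'h) \<Rightarrow> ('h \<Rightarrow> 'h)"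
  assumes "cstar_subalg A"
    and "faithful_state A \<phi>"
    and "star_automorphism A \<Theta>"
    and "\<forall>x\<in>A. \<phi> (\<Theta> x) = \<phi> x"
    and "\<Theta>s ` A \<subseteq> A"
    and "\<forall>x\<in>A. \<forall>y\<in>A. \<phi> (adj y \<circ> \<Theta>s x) = \<phi> (adj (\<Theta> y) \<circ> x)"
  shows "\<forall>(m::nat) (a :: nat \<Rightarrow> ('h \<Rightarrow> 'h)) (\<Psi> :: nat \<Rightarrow> ('h \<Rightarrow> 'h) \<Rightarrow> ('h \<Rightarrow> 'h)).
           (\<forall>i<m. complete_positive A (\<Psi> i)) \<and>
           (\<forall>i<m. a i \<in> A \<and> a i \<noteq> (\<lambda>_. 0)) \<and>
           (\<lambda>h. \<Sum>i<m. a i (adj (a i) h)) = id \<and>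
           (\<forall>x\<in>A. \<Theta>s x = (\<lambda>h. \<Sum>i<m. Ad (a i) (\<Psi> i x) h))
           \<longrightarrow> (\<exists>z :: nat \<Rightarrow> ('h \<Rightarrow> 'h). \<forall>i<m. z i \<in> commutant (\<Theta>s ` A) \<and>
                  (\<forall>x\<in>A. Ad (a i) (\<Psi> i x) = z i \<circ> \<Theta>s x))"
proof -
  have AB: "A \<subseteq> BH" and idA: "id \<in> A"
    and addA: "\<And>S T. S \<in> A \<Longrightarrow> T \<in> A \<Longrightarrow> (\<lambda>x. S x + T x) \<in> A"
    and compA: "\<And>S T. S \<in> A \<Longrightarrow> T \<in> A \<Longrightarrow> S \<circ> T \<in> A"
    and scA: "\<And>S c. S \<in> A \<Longrightarrow> (\<lambda>x. scaleC c (S x)) \<in> A"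
    and adjA: "\<And>S. S \<in> A \<Longrightarrow> adj S \<in> A"
    using assms(1) unfolding cstar_subalg_def by blast+
  have BHA: "\<And>S. S \<in> A \<Longrightarrow> S \<in> BH" using AB by blast
  have phadd: "\<And>S T. S \<in> A \<Longrightarrow> T \<in> A \<Longrightarrow> \<phi> (\<lambda>x. S x + T x) = \<phi> S + \<phi> T"
    and phsc: "\<And>S c. S \<in> A \<Longrightarrow> \<phi> (\<lambda>x. scaleC c (S x)) = c * \<phi> S"
    and phfaith: "\<And>T. T \<in> A \<Longrightarrow> \<phi> (adj T \<circ> T) = 0 \<Longrightarrow> T = (\<lambda>_. 0)"
    using assms(2) unfolding faithful_state_def by blast+
  have Thmul: "\<And>S T. S \<in> A \<Longrightarrow> T \<in> A \<Longrightarrow> \<Theta> (S \<circ> T) = \<Theta> S \<circ> \<Theta> T"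
    and Thadj: "\<And>S. S \<in> A \<Longrightarrow> \<Theta> (adj S) = adj (\<Theta> S)" and Thbij: "bij_betw \<Theta> A A"
    using assms(3) unfolding star_automorphism_def by blast+
  have Thinj: "\<And>S T. S \<in> A \<Longrightarrow> T \<in> A \<Longrightarrow> \<Theta> S = \<Theta> T \<Longrightarrow> S = T"
    using bij_betw_imp_inj_on[OF Thbij] by (simp add: inj_on_def)
  have Thsurj: "\<And>x. x \<in> A \<Longrightarrow> \<exists>w\<in>A. \<Theta> w = x"
    using bij_betw_imp_surj_on[OF Thbij] by (metis imageE)
  have Thid: "\<Theta> id = id"
  proof -
    obtain s where s: "s \<in> A" "\<Theta> s = id" using Thsurj[OF idA] by blast
    have "\<Theta> s = \<Theta> (id \<circ> s)" by simp
    also have "\<dots> = \<Theta> id \<circ> \<Theta> s" using Thmul[OF idA s(1)] .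
    finally show ?thesis using s(2) by simp
  qed
  have inv: "\<Theta>s x \<in> A \<and> \<Theta> (\<Theta>s x) = x" if xA: "x \<in> A" for x
  proof -
    obtain w where wA: "w \<in> A" and wx: "\<Theta> w = x" using Thsurj[OF xA] by blast
    have sxA: "\<Theta>s x \<in> A" using assms(5) xA by blast
    define D where "D = (\<lambda>h. \<Theta>s x h + scaleC (-1) (w h))"
    have DA: "D \<in> A" unfolding D_def by (intro addA scA sxA wA)
    have key: "\<phi> (adj y \<circ> D) = 0" if yA: "y \<in> A" for y
    proof -
      have ayA: "adj y \<in> A" using adjA yA by blast
      have c1: "adj y \<circ> \<Theta>s x \<in> A" by (intro compA ayA sxA)
      have c2: "adj y \<circ> w \<in> A" by (intro compA ayA wA)
      have c3: "(\<lambda>h. scaleC (-1) ((adj y \<circ> w) h)) \<in> A" by (intro scA c2)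
      have eq: "adj y \<circ> D = (\<lambda>h. (adj y \<circ> \<Theta>s x) h + (\<lambda>h. scaleC (-1) ((adj y \<circ> w) h)) h)"
        unfolding D_def by (simp add: fun_eq_iff BH_add[OF BHA[OF ayA]] BH_scaleC[OF BHA[OF ayA]])
      have "\<phi> (adj y \<circ> D) = \<phi> (adj y \<circ> \<Theta>s x) + \<phi> (\<lambda>h. scaleC (-1) ((adj y \<circ> w) h))"
        unfolding eq by (rule phadd[OF c1 c3])
      also have "\<phi> (\<lambda>h. scaleC (-1) ((adj y \<circ> w) h)) = - \<phi> (adj y \<circ> w)"
        using phsc[OF c2, of "-1"] by simp
      also have "\<phi> (adj y \<circ> \<Theta>s x) = \<phi> (adj (\<Theta> y) \<circ> x)" using assms(6) xA yA by blast
      also have "adj (\<Theta> y) \<circ> x = \<Theta> (adj y \<circ> w)" using Thmul[OF ayA wA] Thadj[OF yA] wx by simp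
      also have "\<phi> (\<Theta> (adj y \<circ> w)) = \<phi> (adj y \<circ> w)" using assms(4) c2 by blast
      finally show ?thesis by (simp only: add.right_inverse)
    qed
    have "D = (\<lambda>_. 0)" using phfaith[OF DA] key[OF DA] by blast
    then have "\<Theta>s x = w" by (auto simp: fun_eq_iff D_def scaleC_minus1)
    then show ?thesis using sxA wx by simp
  qed
  have piA: "\<And>x. x \<in> A \<Longrightarrow> \<Theta>s x \<in> A" and ThTs: "\<And>x. x \<in> A \<Longrightarrow> \<Theta> (\<Theta>s x) = x" using inv by auto
  have pimul: "\<Theta>s (S \<circ> T) = \<Theta>s S \<circ> \<Theta>s T" if SA: "S \<in> A" and TA: "T \<in> A" for S T
  proof (rule Thinj)
    show "\<Theta>s (S \<circ> T) \<in> A" using piA compA SA TA by blast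
    show "\<Theta>s S \<circ> \<Theta>s T \<in> A" using compA piA SA TA by blast
    show "\<Theta> (\<Theta>s (S \<circ> T)) = \<Theta> (\<Theta>s S \<circ> \<Theta>s T)"
      using ThTs[OF compA[OF SA TA]] Thmul[OF piA[OF SA] piA[OF TA]] ThTs[OF SA] ThTs[OF TA] by simp
  qed
  have piadj: "\<Theta>s (adj S) = adj (\<Theta>s S)" if SA: "S \<in> A" for S
  proof (rule Thinj)
    show "\<Theta>s (adj S) \<in> A" using piA adjA SA by blast
    show "adj (\<Theta>s S) \<in> A" using piA adjA SA by blast
    show "\<Theta> (\<Theta>s (adj S)) = \<Theta> (adj (\<Theta>s S))"
      using ThTs[OF adjA[OF SA]] Thadj[OF piA[OF SA]] ThTs[OF SA] by simp
  qed
  have piid: "\<Theta>s id = id"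
    by (rule Thinj) (use piA idA ThTs Thid in auto)
  show ?thesis
  proof (intro allI impI)
    fix m :: nat and a :: "nat \<Rightarrow> ('h \<Rightarrow> 'h)" and \<Psi> :: "nat \<Rightarrow> ('h \<Rightarrow> 'h) \<Rightarrow> ('h \<Rightarrow> 'h)"
    assume H: "(\<forall>i<m. complete_positive A (\<Psi> i)) \<and>
           (\<forall>i<m. a i \<in> A \<and> a i \<noteq> (\<lambda>_. 0)) \<and>
           (\<lambda>h. \<Sum>i<m. a i (adj (a i) h)) = id \<and>
           (\<forall>x\<in>A. \<Theta>s x = (\<lambda>h. \<Sum>i<m. Ad (a i) (\<Psi> i x) h))"
    have cp: "\<And>i. i < m \<Longrightarrow> complete_positive A (\<Psi> i)" and aA: "\<And>i. i < m \<Longrightarrow> a i \<in> A"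
      and dec: "\<And>x. x \<in> A \<Longrightarrow> \<Theta>s x = (\<lambda>h. \<Sum>i<m. Ad (a i) (\<Psi> i x) h)" using H by auto
    have PsiA: "\<And>i x. i < m \<Longrightarrow> x \<in> A \<Longrightarrow> \<Psi> i x \<in> A"
      using cp unfolding complete_positive_def linear_map_on_def by blast
    have PsiP: "\<And>i n X. i < m \<Longrightarrow> (\<forall>i<n. \<forall>j<n. X i j \<in> A) \<Longrightarrow> pos_opmat n X \<Longrightarrow> pos_opmat n (\<lambda>i' j. \<Psi> i (X i' j))"
      using cp unfolding complete_positive_def by blast
    define \<Phi> where "\<Phi> i x = Ad (a i) (\<Psi> i x)" for i x
    have PhiA: "\<And>i x. i < m \<Longrightarrow> x \<in> A \<Longrightarrow> \<Phi> i x \<in> A"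
      unfolding \<Phi>_def Ad_def by (intro compA adjA aA PsiA)
    define z where "z i = \<Phi> i id" for i
    have zA: "\<And>i. i < m \<Longrightarrow> z i \<in> A" unfolding z_def using PhiA idA by blast
    have PmA: "\<And>x i j. x \<in> A \<Longrightarrow> i < 2 \<Longrightarrow> j < 2 \<Longrightarrow> Pm x i j \<in> A"
      unfolding Pm_def using idA adjA compA by auto
    have posPhi: "pos_opmat 2 (\<lambda>i' j. \<Phi> i (Pm x i' j))" if im: "i < m" and xA: "x \<in> A" for i x
    proof -
      have "pos_opmat 2 (\<lambda>i' j. \<Psi> i (Pm x i' j))"
        using PsiP[OF im _ pos_Pm[OF BHA[OF xA]]] PmA[OF xA] by blast
      then show ?thesis unfolding \<Phi>_def Ad_def using pos_Ad[OF BHA[OF aA[OF im]]] by blast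
    qed
    have PhiPmBH: "\<And>i x i' j. i < m \<Longrightarrow> x \<in> A \<Longrightarrow> i' < 2 \<Longrightarrow> j < 2 \<Longrightarrow> \<Phi> i (Pm x i' j) \<in> BH"
      using PhiA PmA BHA by blast
    have piPm: "\<And>x i j. x \<in> A \<Longrightarrow> \<Theta>s (Pm x i j) = Pm (\<Theta>s x) i j"
      unfolding Pm_def using piid piadj pimul adjA by auto
    have qfsum: "qf 2 (Pm (\<Theta>s x)) \<xi> = (\<Sum>k<m. qf 2 (\<lambda>i j. \<Phi> k (Pm x i j)) \<xi>)" if xA: "x \<in> A" for x \<xi>
    proof -
      have e: "\<And>i j h. i < 2 \<Longrightarrow> j < 2 \<Longrightarrow> \<Theta>s (Pm x i j) h = (\<Sum>k<m. \<Phi> k (Pm x i j) h)"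
        using dec PmA[OF xA] by (simp add: \<Phi>_def)
      have "qf 2 (Pm (\<Theta>s x)) \<xi> = qf 2 (\<lambda>i j. \<Theta>s (Pm x i j)) \<xi>"
        using piPm[OF xA] by simp
      also have "\<dots> = (\<Sum>k<m. qf 2 (\<lambda>i j. \<Phi> k (Pm x i j)) \<xi>)"
        by (simp add: qf2 e cinner_sum_right sum.distrib)
      finally show ?thesis .
    qed
    have fact1: "\<Phi> i x = z i \<circ> \<Theta>s x" if im: "i < m" and xA: "x \<in> A" for i x
    proof
      fix h
      have pxA: "\<Theta>s x \<in> A" using piA xA by blast
      define \<xi> where "\<xi> = (\<lambda>j::nat. if j = 0 then \<Theta>s x h else - h)"
      have q0: "qf 2 (Pm (\<Theta>s x)) \<xi> = 0"
        by (simp add: qf_Pm[OF BHA[OF pxA]] \<xi>_def BH_minus[OF BHA[OF pxA]])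
      have each: "qf 2 (\<lambda>i' j. \<Phi> k (Pm x i' j)) \<xi> = 0" if km: "k < m" for k
      proof -
        let ?q = "\<lambda>k. qf 2 (\<lambda>i' j. \<Phi> k (Pm x i' j)) \<xi>"
        have pos: "\<And>k. k \<in> {..<m} \<Longrightarrow> Im (?q k) = 0 \<and> Re (?q k) \<ge> 0"
          using posPhi xA unfolding pos_opmat_qf by simp
        have "(\<Sum>k<m. ?q k) = 0" using q0 qfsum[OF xA] by simp
        then have "(\<Sum>k<m. Re (?q k)) = 0" by (metis Re_sum zero_complex.sel(1))
        then have "\<forall>k\<in>{..<m}. Re (?q k) = 0" using pos by (subst sum_nonneg_eq_0_iff[symmetric]) auto
        then show ?thesis using pos km by (simp add: complex_eq_iff)
      qed
      have "\<Phi> i (Pm x 0 0) (\<xi> 0) + \<Phi> i (Pm x 0 1) (\<xi> 1) = 0"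
        by (rule qf_zero_kernel[OF _ posPhi[OF im xA] each[OF im]]) (use PhiPmBH im xA in blast)
      then have "z i (\<Theta>s x h) + \<Phi> i x (- h) = 0" by (simp add: Pm_def \<xi>_def z_def)
      moreover have "\<Phi> i x (- h) = - \<Phi> i x h" using BH_minus BHA PhiA im xA by blast
      ultimately show "\<Phi> i x h = (z i \<circ> \<Theta>s x) h" by (simp add: eq_neg_iff_add_eq_0 add.commute)
    qed
    have herm: "cinner \<beta> (\<Phi> i (adj x) \<alpha>) = cnj (cinner \<alpha> (\<Phi> i x \<beta>))" if im: "i < m" and xA: "x \<in> A" for i x \<alpha> \<beta>
      using qf_herm[OF _ posPhi[OF im xA], of \<beta> \<alpha>] PhiPmBH[OF im xA] by (simp add: Pm_def)
    have zherm: "cinner \<beta> (z i \<gamma>) = cinner (z i \<beta>) \<gamma>" if im: "i < m" for i \<beta> \<gamma>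
      using herm[OF im idA, of \<beta> \<gamma>] cinner_commute[of "z i \<beta>" \<gamma>] by (simp add: adj_id z_def)
    have comm: "z i \<circ> \<Theta>s x = \<Theta>s x \<circ> z i" if im: "i < m" and xA: "x \<in> A" for i x
    proof
      fix \<beta>
      have pxA: "\<Theta>s x \<in> A" using piA xA by blast
      have "\<And>\<alpha>. cinner (\<Theta>s x (z i \<beta>)) \<alpha> = cinner (z i (\<Theta>s x \<beta>)) \<alpha>"
      proof -
        fix \<alpha>
        have "cinner (\<Theta>s x (z i \<beta>)) \<alpha> = cinner (z i \<beta>) (adj (\<Theta>s x) \<alpha>)"
          by (rule adj_prop[OF BHA[OF pxA]])
        also have "\<dots> = cinner \<beta> (z i (adj (\<Theta>s x) \<alpha>))" by (rule zherm[OF im, symmetric])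
        also have "\<dots> = cinner \<beta> (\<Phi> i (adj x) \<alpha>)"
          using fact1[OF im adjA[OF xA]] piadj[OF xA] by simp
        also have "\<dots> = cnj (cinner \<alpha> (\<Phi> i x \<beta>))" by (rule herm[OF im xA])
        also have "\<dots> = cinner (\<Phi> i x \<beta>) \<alpha>" by (simp only: cinner_commute[symmetric])
        also have "\<dots> = cinner (z i (\<Theta>s x \<beta>)) \<alpha>" using fact1[OF im xA] by simp
        finally show "cinner (\<Theta>s x (z i \<beta>)) \<alpha> = cinner (z i (\<Theta>s x \<beta>)) \<alpha>" .
      qed
      then have "\<And>\<alpha>. cinner \<alpha> (\<Theta>s x (z i \<beta>) - z i (\<Theta>s x \<beta>)) = 0"
        by (metis cinner_commute cinner_diff_left complex_cnj_zero right_minus_eq)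
      then have "\<Theta>s x (z i \<beta>) - z i (\<Theta>s x \<beta>) = 0" by (rule cinner_all_zero)
      then show "(z i \<circ> \<Theta>s x) \<beta> = (\<Theta>s x \<circ> z i) \<beta>" by simp
    qed
    show "\<exists>z :: nat \<Rightarrow> ('h \<Rightarrow> 'h). \<forall>i<m. z i \<in> commutant (\<Theta>s ` A) \<and>
                  (\<forall>x\<in>A. Ad (a i) (\<Psi> i x) = z i \<circ> \<Theta>s x)"
    proof (intro exI[of _ z] allI impI conjI ballI)
      fix i assume im: "i < m"
      show "z i \<in> commutant (\<Theta>s ` A)"
        unfolding commutant_def using zA[OF im] BHA comm[OF im] by auto
      fix x assume "x \<in> A"
      then show "Ad (a i) (\<Psi> i x) = z i \<circ> \<Theta>s x" using fact1[OF im] by (simp add: \<Phi>_def)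
    qed
  qed
qed


end
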